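(* Let $R\in(0,\infty)\setminus\{1\}$, $b_1>0$, $b_2>1$, $b_3>0$, and let $m,\ell,F$ be as in the context. For $q\in(0,1]$ and $(1-R)m(q)<(1-R)n<(1-R)\ell(q)$, and for $q>1$ and $(1-R)m(q)<(1-R)n$, we have $\frac{\partial}{\partial n}F(q,n)\le0$.
   Context: Define $m(q)=\frac{R(1-R)}{b_1}q^2-\frac{b_3(1-R)}{b_1}q+1$, $\ell(q)=m(q)+\frac{1-R}{b_1}q(1-q)+\frac{(b_2-1)R(1-R)}{b_1}\frac{q}{(1-R)q+R}$, $\varphi(q,n)=b_1(n-1)+(1-R)(b_3-2R)q+(2-b_2)R(1-R)$, $E(q)^2=4R^2(1-R)^2(b_2-1)(1-q)^2$, $O(q,n)=\frac{(1-R)n}{R(1-q)}-\frac{2(1-R)^2qn/R}{2(1-R)(1-q)[(1-R)q+R]-\varphi(q,n)-\mathrm{sgn}(1-R)\sqrt{\varphi(q,n)^2+E(q)^2}}$. Let $\mathcal{S}=\{q=1\}\cup\{q=\frac{R}{R-1}\}\cup\{n=0\}\cup\{q<1,(1-R)n\ge(1-R)\ell(q)\}$. On $(0,\infty)\times[0,\infty)\setminus\mathcal{S}$ define $F(q,n)=O(q,n)/n$, extended to $(0,\infty)\times[0,\infty)$ where possible by taking limits (in particular at $q=1$, at $q=R/(R-1)$ when $R>1$, and at $n=\ell(q)$ for $q>1$). *)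

theory Defs
  imports "HOL-Analysis.Analysis"
begin

definition mfun :: "real \<Rightarrow> real \<Rightarrow> real \<Rightarrow> real \<Rightarrow> real" where
  "mfun R b1 b3 q = R * (1 - R) / b1 * q^2 - b3 * (1 - R) / b1 * q + 1"

definition lfun :: "real \<Rightarrow> real \<Rightarrow> real \<Rightarrow> real \<Rightarrow> real \<Rightarrow> real" where
  "lfun R b1 b2 b3 q = mfun R b1 b3 q + (1 - R) / b1 * q * (1 - q)
      + (b2 - 1) * R * (1 - R) / b1 * (q / ((1 - R) * q + R))"

definition phifun :: "real \<Rightarrow> real \<Rightarrow> real \<Rightarrow> real \<Rightarrow> real \<Rightarrow> real \<Rightarrow> real" where
  "phifun R b1 b2 b3 q n = b1 * (n - 1) + (1 - R) * (b3 - 2 * R) * q + (2 - b2) * R * (1 - R)"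

definition Esq :: "real \<Rightarrow> real \<Rightarrow> real \<Rightarrow> real" where
  "Esq R b2 q = 4 * R^2 * (1 - R)^2 * (b2 - 1) * (1 - q)^2"

definition Dfun :: "real \<Rightarrow> real \<Rightarrow> real \<Rightarrow> real \<Rightarrow> real \<Rightarrow> real \<Rightarrow> real" where
  "Dfun R b1 b2 b3 q n = 2 * (1 - R) * (1 - q) * ((1 - R) * q + R) - phifun R b1 b2 b3 q n
      - sgn (1 - R) * sqrt ((phifun R b1 b2 b3 q n)^2 + Esq R b2 q)"

definition Ofun :: "real \<Rightarrow> real \<Rightarrow> real \<Rightarrow> real \<Rightarrow> real \<Rightarrow> real \<Rightarrow> real" where
  "Ofun R b1 b2 b3 q n = (1 - R) * n / (R * (1 - q))
      - (2 * (1 - R)^2 * q * n / R) / Dfun R b1 b2 b3 q n"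

definition Sset :: "real \<Rightarrow> real \<Rightarrow> real \<Rightarrow> real \<Rightarrow> (real \<times> real) set" where
  "Sset R b1 b2 b3 = {(q, n). q = 1 \<or> q = R / (R - 1) \<or> n = 0 \<or>
      (q < 1 \<and> (1 - R) * n \<ge> (1 - R) * lfun R b1 b2 b3 q)}"

(* points of (0,\<infinity>) \<times> [0,\<infinity>) outside \<S> where the formula O/n is well defined
   (all denominators nonzero) *)
definition Gset :: "real \<Rightarrow> real \<Rightarrow> real \<Rightarrow> real \<Rightarrow> (real \<times> real) set" where
  "Gset R b1 b2 b3 = ({0<..} \<times> {0..}) - Sset R b1 b2 b3
      - {(q, n). Dfun R b1 b2 b3 q n = 0 \<or> (1 - R) * q + R = 0}"

definition Ffun :: "real \<Rightarrow> real \<Rightarrow> real \<Rightarrow> real \<Rightarrow> real \<Rightarrow> real \<Rightarrow> real" where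
  "Ffun R b1 b2 b3 q n =
     (if (q, n) \<in> Gset R b1 b2 b3 then Ofun R b1 b2 b3 q n / n
      else Lim (at (q, n) within Gset R b1 b2 b3) (\<lambda>(x, y). Ofun R b1 b2 b3 x y / y))"

end

theory Submission
  imports Defs
begin


lemma limptI:
  fixes G :: "(real \<times> real) set" and c :: real
  assumes "\<delta> > 0" "snd z \<ge> 0"
    and "\<And>u v. (u,v) \<in> ball z \<delta> \<Longrightarrow> u \<noteq> 1 \<Longrightarrow> u \<noteq> c \<Longrightarrow> v > 0 \<Longrightarrow> (u,v) \<in> G"
  shows "z islimpt G"
proof (unfold islimpt_approachable, intro allI impI)
  fix e :: real assume e: "e > 0"
  obtain u v where z: "z = (u,v)" by (cases z)
  define t0 where "t0 = min e \<delta> / 2"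
  have t0: "t0 > 0" "t0 < e" "t0 < \<delta>" using e assms(1) by (auto simp: t0_def)
  obtain t where t: "t > 0" "t \<le> t0 / 2" "u + t \<noteq> 1" "u + t \<noteq> c"
  proof -
    consider "u + t0/2 \<noteq> 1 \<and> u + t0/2 \<noteq> c" | "u + t0/3 \<noteq> 1 \<and> u + t0/3 \<noteq> c"
      | "u + t0/4 \<noteq> 1 \<and> u + t0/4 \<noteq> c" using t0 by fastforce
    then show ?thesis
    proof cases
      case 1 then show ?thesis using that[of "t0/2"] t0 by simp
    next
      case 2 then show ?thesis using that[of "t0/3"] t0 by simp
    next
      case 3 then show ?thesis using that[of "t0/4"] t0 by simp
    qed
  qed
  have d: "dist (u+t, v+t) (u,v) < 2 * t"
  proof -
    have "dist (u+t, v+t) (u,v) = sqrt (2 * t^2)" by (simp add: dist_Pair_Pair dist_real_def)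
    also have "\<dots> < sqrt ((2*t)^2)" using t by (simp add: power2_eq_square)
    also have "\<dots> = 2 * t" using t by (simp only: real_sqrt_abs)
    finally show ?thesis .
  qed
  have "(u+t, v+t) \<in> G"
    using assms(3)[of "u+t" "v+t"] d t t0 assms(2) z by (simp add: dist_commute)
  moreover have "(u+t, v+t) \<noteq> z" using t z by simp
  ultimately show "\<exists>x'\<in>G. x' \<noteq> z \<and> dist x' z < e" using d t t0 z by (intro bexI[of _ "(u+t,v+t)"]) auto
qed

lemma Ffun_eqI:
  fixes f :: "real \<times> real \<Rightarrow> real"
  assumes U: "open U" "p \<in> U" and cont: "continuous_on U f"
    and agree: "\<And>z. z \<in> U \<Longrightarrow> z \<in> Gset R b1 b2 b3 \<Longrightarrow> Ofun R b1 b2 b3 (fst z) (snd z) / snd z = f z"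
    and lp: "p islimpt Gset R b1 b2 b3"
  shows "Ffun R b1 b2 b3 (fst p) (snd p) = f p"
proof (cases "p \<in> Gset R b1 b2 b3")
  case True
  then show ?thesis using agree[OF U(2)] by (simp add: Ffun_def)
next
  case False
  let ?g = "\<lambda>(x, y). Ofun R b1 b2 b3 x y / y"
  have "isCont f p" using cont U continuous_on_eq_continuous_at by blast
  hence "(f \<longlongrightarrow> f p) (at p within Gset R b1 b2 b3)"
    by (simp add: isCont_def Lim_at_imp_Lim_at_within)
  moreover have "eventually (\<lambda>z. f z = ?g z) (at p within Gset R b1 b2 b3)"
    unfolding eventually_at_topological using U agree by (intro exI[of _ U]) auto
  ultimately have "(?g \<longlongrightarrow> f p) (at p within Gset R b1 b2 b3)"
    by (rule Lim_transform_eventually)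
  moreover have "\<not> trivial_limit (at p within Gset R b1 b2 b3)"
    using lp trivial_limit_within by blast
  ultimately show ?thesis using False
    by (simp add: Ffun_def tendsto_Lim case_prod_unfold)
qed


lemma lid:
  assumes "(1 - R) * q + R \<noteq> 0" "b1 \<noteq> 0"
  shows "((1 - R) * q + R) * phifun R b1 b2 b3 q (lfun R b1 b2 b3 q)
     = (1 - R) * (1 - q) * (((1 - R) * q + R)^2 - R^2 * (b2 - 1))"
proof -
  define w where "w = (1 - R) * q + R"
  have w: "w \<noteq> 0" using assms w_def by simp
  have 1: "b1 * lfun R b1 b2 b3 q = R * (1 - R) * q^2 - b3 * (1 - R) * q + b1
      + (1 - R) * q * (1 - q) + (b2 - 1) * R * (1 - R) * q / w"
    using assms(2) w unfolding lfun_def mfun_def w_def[symmetric] by (simp add: field_simps)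
  have 2: "phifun R b1 b2 b3 q (lfun R b1 b2 b3 q) = R * (1 - R) * q^2 + (1 - R) * q * (1 - q)
     - 2 * R * (1 - R) * q + (2 - b2) * R * (1 - R) + (b2 - 1) * R * (1 - R) * q / w"
    unfolding phifun_def using 1 by (simp add: algebra_simps)
  have "w * phifun R b1 b2 b3 q (lfun R b1 b2 b3 q) = w * (R * (1 - R) * q^2 + (1 - R) * q * (1 - q)
     - 2 * R * (1 - R) * q + (2 - b2) * R * (1 - R)) + (b2 - 1) * R * (1 - R) * q"
    unfolding 2 using w by (simp add: field_simps)
  also have "\<dots> = (1 - R) * (1 - q) * (w^2 - R^2 * (b2 - 1))"
    unfolding w_def by (simp add: algebra_simps power2_eq_square)
  finally show ?thesis unfolding w_def .
qed


lemma D_ne: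
  fixes R b1 b2 b3 q n :: real
  assumes R: "0 < R" "R \<noteq> 1" and b: "0 < b1" "1 < b2"
    and q: "0 < q" "q \<noteq> 1"
    and reg: "(0 < q \<and> q \<le> 1 \<and> (1 - R) * mfun R b1 b3 q < (1 - R) * n
            \<and> (1 - R) * n < (1 - R) * lfun R b1 b2 b3 q)
         \<or> (1 < q \<and> (1 - R) * mfun R b1 b3 q < (1 - R) * n)"
  shows "Dfun R b1 b2 b3 q n \<noteq> 0"
proof
  assume D0: "Dfun R b1 b2 b3 q n = 0"
  define e where "e = 1 - q"
  define w where "w = (1 - R) * q + R"
  define p where "p = phifun R b1 b2 b3 q n"
  define E2 where "E2 = Esq R b2 q"
  define s where "s = sgn (1 - R)"
  define r where "r = sqrt (p^2 + E2)"
  define a where "a = 2 * (1 - R) * e * w - p"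
  have e0: "e \<noteq> 0" using q e_def by simp
  have R1: "1 - R \<noteq> 0" using R by simp
  have E2: "E2 = 4 * R^2 * (1 - R)^2 * (b2 - 1) * e^2" unfolding E2_def Esq_def e_def by simp
  have E2pos: "E2 > 0" unfolding E2 using R b e0 R1 by simp
  have s2: "s * s = 1" unfolding s_def using R1 by (auto simp: sgn_if)
  have sR: "s * (1 - R) = \<bar>1 - R\<bar>" unfolding s_def by (simp add: abs_sgn mult.commute)
  have aeq: "a = s * r" using D0 unfolding Dfun_def a_def s_def r_def p_def E2_def e_def w_def by simp
  have r2: "r^2 = p^2 + E2" unfolding r_def using E2pos by simp
  have rge: "r > \<bar>p\<bar>"
  proof -
    have "sqrt (p^2) < sqrt (p^2 + E2)" using E2pos by (intro real_sqrt_less_mono) simp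
    then show ?thesis unfolding r_def by simp
  qed
  show False
  proof (cases "w = 0")
    case True
    then have "a = - p" unfolding a_def by simp
    then have "\<bar>s * r\<bar> = \<bar>p\<bar>" using aeq by simp
    moreover have "\<bar>s * r\<bar> = r" using s2 rge
      by (metis abs_mult abs_of_pos abs_sgn_eq_1 le_less_trans abs_ge_zero mult_1 R1 s_def sgn_abs)
    ultimately show False using rge by simp
  next
    case False
    have "a^2 = r^2" using aeq s2 by (simp add: power2_eq_square algebra_simps)
    hence "a^2 = p^2 + E2" using r2 by simp
    hence "4 * (1 - R) * e * ((1 - R) * e * w^2 - w * p - R^2 * (1 - R) * (b2 - 1) * e) = 0"
      unfolding a_def E2 by (simp add: algebra_simps power2_eq_square)
    hence X: "(1 - R) * e * w^2 - w * p - R^2 * (1 - R) * (b2 - 1) * e = 0"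
      using R1 e0 by simp
    have key: "w * p = (1 - R) * e * (w^2 - R^2 * (b2 - 1))"
      using X by (simp add: algebra_simps)
    have L: "w * phifun R b1 b2 b3 q (lfun R b1 b2 b3 q) = (1 - R) * e * (w^2 - R^2 * (b2 - 1))"
      using lid[of R q b1 b2 b3] False b unfolding w_def e_def by simp
    have "p - phifun R b1 b2 b3 q (lfun R b1 b2 b3 q) = b1 * (n - lfun R b1 b2 b3 q)"
      unfolding p_def phifun_def by (simp add: algebra_simps)
    moreover have "w * p = w * phifun R b1 b2 b3 q (lfun R b1 b2 b3 q)" using key L by simp
    hence "w * (p - phifun R b1 b2 b3 q (lfun R b1 b2 b3 q)) = 0" by (simp add: right_diff_distrib)
    ultimately have "w * (b1 * (n - lfun R b1 b2 b3 q)) = 0" by simp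
    hence nl: "n = lfun R b1 b2 b3 q" using False b by simp
    show False
    proof (cases "q < 1")
      case True then show False using reg nl by auto
    next
      case qg: False
      hence qg: "q > 1" using q by simp
      have "a * w = (1 - R) * e * (w^2 + R^2 * (b2 - 1))"
        unfolding a_def using key by (simp add: algebra_simps power2_eq_square)
      hence "s * a * w = (s * (1 - R)) * e * (w^2 + R^2 * (b2 - 1))"
        by (simp add: mult.assoc)
      hence "s * a * w = \<bar>1 - R\<bar> * e * (w^2 + R^2 * (b2 - 1))"
        using sR by simp
      moreover have "\<bar>1 - R\<bar> * e * (w^2 + R^2 * (b2 - 1)) < 0"
      proof (rule mult_neg_pos)
        show "\<bar>1 - R\<bar> * e < 0" using R1 qg unfolding e_def by (intro mult_pos_neg) auto
        show "0 < w^2 + R^2 * (b2 - 1)" using b R by (intro add_nonneg_pos) auto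
      qed
      ultimately have sawneg: "s * a * w < 0" by simp
      have "s * a \<ge> 0" using aeq s2 rge by (simp add: mult.assoc[symmetric])
      hence wneg: "w < 0" using sawneg False
        by (metis linorder_not_le mult_nonneg_nonneg)
      have lm: "lfun R b1 b2 b3 q - mfun R b1 b3 q
          = (1 - R) / b1 * q * ((1 - q) + (b2 - 1) * R / w)"
        using False b unfolding lfun_def w_def[symmetric] by (simp add: field_simps)
      have "(b2 - 1) * R / w < 0" using wneg b R by (simp add: divide_pos_neg)
      hence "(1 - q) + (b2 - 1) * R / w < 0" using qg by simp
      hence "(1 - R) * ((1 - R) / b1 * q * ((1 - q) + (b2 - 1) * R / w)) < 0"
      proof -
        assume h: "(1 - q) + (b2 - 1) * R / w < 0"
        have "(1 - R) * ((1 - R) / b1 * q * ((1 - q) + (b2 - 1) * R / w))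
           = ((1 - R)^2 / b1 * q) * ((1 - q) + (b2 - 1) * R / w)" by (simp add: power2_eq_square)
        also have "\<dots> < 0" using h R1 b q by (intro mult_pos_neg) auto
        finally show ?thesis .
      qed
      hence "(1 - R) * (lfun R b1 b2 b3 q - mfun R b1 b3 q) < 0"
        using lm by metis
      hence "(1 - R) * lfun R b1 b2 b3 q < (1 - R) * mfun R b1 b3 q"
        by (simp add: right_diff_distrib)
      then show False using reg nl qg by auto
    qed
  qed
qed


lemma Esq_pos: "R > 0 \<Longrightarrow> R \<noteq> 1 \<Longrightarrow> b2 > 1 \<Longrightarrow> q \<noteq> 1 \<Longrightarrow> Esq R b2 q > 0"
  unfolding Esq_def by simp

lemma Dderiv_nonpos_aux:
  fixes b1 s p r :: real
  assumes "b1 > 0" "r > 0" "\<bar>s * p\<bar> \<le> r"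
  shows "- b1 - s * (b1 * p / r) \<le> 0"
proof -
  have "- b1 - s * (b1 * p / r) = - (b1 * (r + s * p)) / r" using assms(2) by (simp add: field_simps)
  moreover have "b1 * (r + s * p) \<ge> 0" using assms by (intro mult_nonneg_nonneg) linarith+
  ultimately show ?thesis using assms(2) by (simp add: divide_nonpos_pos)
qed

lemma Dderiv_nonpos:
  assumes "b1 > 0" "E > 0"
  shows "- b1 - sgn (1 - R) * (b1 * p / sqrt (p^2 + E)) \<le> 0"
proof (rule Dderiv_nonpos_aux[OF assms(1)])
  have "sqrt (p^2) \<le> sqrt (p^2 + E)" using assms by (intro real_sqrt_le_mono) simp
  hence r: "sqrt (p^2 + E) \<ge> \<bar>p\<bar>" by simp
  show "sqrt (p^2 + E) > 0" using assms by (simp add: add_nonneg_pos)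
  have "\<bar>sgn (1 - R) * p\<bar> \<le> \<bar>p\<bar>" by (cases "R < 1"; cases "R = 1") (auto simp: abs_mult)
  then show "\<bar>sgn (1 - R) * p\<bar> \<le> sqrt (p^2 + E)" using r by linarith
qed
lemma Dderiv:
  assumes "R > 0" "R \<noteq> 1" "b2 > 1" "q \<noteq> 1"
  shows "((\<lambda>x. Dfun R b1 b2 b3 q x) has_real_derivative
     (- b1 - sgn (1 - R) * (b1 * phifun R b1 b2 b3 q x0 / sqrt ((phifun R b1 b2 b3 q x0)^2 + Esq R b2 q)))) (at x0)"
proof -
  have E: "Esq R b2 q > 0" using Esq_pos assms by blast
  define p where "p = (\<lambda>x. phifun R b1 b2 b3 q x)"
  define E2 where "E2 = Esq R b2 q"
  have pos: "(p x0)^2 + E2 > 0" using E unfolding E2_def by (simp add: add_nonneg_pos)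
  have dp: "(p has_real_derivative b1) (at x0)" unfolding p_def phifun_def
    by (auto intro!: derivative_eq_intros)
  have dq: "((\<lambda>x. (p x)^2 + E2) has_real_derivative (2 * (b1 * p x0))) (at x0)"
    using DERIV_add[OF DERIV_power[OF dp, of 2] DERIV_const[of E2]] by simp
  have ds: "((\<lambda>x. sqrt ((p x)^2 + E2)) has_real_derivative
       (inverse (sqrt ((p x0)^2 + E2)) / 2 * (2 * (b1 * p x0)))) (at x0)"
    by (rule DERIV_chain2[OF DERIV_real_sqrt[OF pos] dq])
  have "((\<lambda>x. 2 * (1 - R) * (1 - q) * ((1 - R) * q + R) - p x - sgn (1 - R) * sqrt ((p x)^2 + E2))
     has_real_derivative (0 - b1 - sgn (1 - R) * (inverse (sqrt ((p x0)^2 + E2)) / 2 * (2 * (b1 * p x0))))) (at x0)"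
    by (rule DERIV_diff[OF DERIV_diff[OF DERIV_const dp] DERIV_cmult[OF ds]])
  moreover have "(0 - b1 - sgn (1 - R) * (inverse (sqrt ((p x0)^2 + E2)) / 2 * (2 * (b1 * p x0))))
     = - b1 - sgn (1 - R) * (b1 * p x0 / sqrt ((p x0)^2 + E2))"
    by (simp add: divide_simps)
  ultimately show ?thesis unfolding Dfun_def p_def E2_def by simp
qed


lemma ev_pos: fixes g :: "real \<times> real \<Rightarrow> real" shows "isCont g p \<Longrightarrow> g p > 0 \<Longrightarrow> eventually (\<lambda>z. g z > 0) (nhds p)"
  unfolding eventually_nhds_conv_at isCont_def using order_tendstoD(1) by blast

lemma ev_ne: fixes g :: "real \<times> real \<Rightarrow> real" shows "isCont g p \<Longrightarrow> g p \<noteq> 0 \<Longrightarrow> eventually (\<lambda>z. g z \<noteq> 0) (nhds p)"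
  using ev_pos[where g="\<lambda>z. \<bar>g z\<bar>" and p=p] by (auto intro: continuous_intros elim: eventually_mono)

lemma Ofun_div:
  assumes "v \<noteq> 0"
  shows "Ofun R b1 b2 b3 u v / v = (1 - R) / (R * (1 - u)) - (2 * (1 - R)^2 * u / R) * inverse (Dfun R b1 b2 b3 u v)"
proof -
  have "Ofun R b1 b2 b3 u v = v * ((1 - R) / (R * (1 - u)) - (2 * (1 - R)^2 * u / R) * inverse (Dfun R b1 b2 b3 u v))"
    unfolding Ofun_def by (simp add: divide_inverse algebra_simps)
  then show ?thesis using assms by simp
qed

lemma isCont_D: "isCont (\<lambda>z. Dfun R b1 b2 b3 (fst z) (snd z)) p"
  unfolding Dfun_def phifun_def Esq_def by (intro continuous_intros)

lemma isCont_l: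
  assumes "(1 - R) * fst p + R \<noteq> 0" "b1 \<noteq> 0"
  shows "isCont (\<lambda>z. lfun R b1 b2 b3 (fst z)) p"
  unfolding lfun_def mfun_def
  by (intro continuous_intros) (use assms in auto)


lemma main_qne1:
  fixes R b1 b2 b3 q n :: real
  assumes R: "0 < R" "R \<noteq> 1" and b: "0 < b1" "1 < b2" "0 < b3"
    and n0: "0 \<le> n" and q1: "q \<noteq> 1"
    and reg: "(0 < q \<and> q \<le> 1 \<and> (1 - R) * mfun R b1 b3 q < (1 - R) * n
            \<and> (1 - R) * n < (1 - R) * lfun R b1 b2 b3 q)
         \<or> (1 < q \<and> (1 - R) * mfun R b1 b3 q < (1 - R) * n)"
  shows "\<exists>D. ((\<lambda>x. Ffun R b1 b2 b3 q x) has_real_derivative D) (at n within {0..}) \<and> D \<le> 0"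
proof -
  have q0: "q > 0" using reg by auto
  define Dp where "Dp = (\<lambda>z::real\<times>real. Dfun R b1 b2 b3 (fst z) (snd z))"
  define f where "f = (\<lambda>z::real\<times>real. (1 - R) / (R * (1 - fst z))
       - (2 * (1 - R)^2 * fst z / R) * inverse (Dp z))"
  define P where "P = (\<lambda>z::real\<times>real. fst z > 0 \<and> Dp z \<noteq> 0 \<and> (1 - fst z) * (1 - q) > 0
       \<and> (q < 1 \<longrightarrow> (1 - R) * lfun R b1 b2 b3 (fst z) - (1 - R) * snd z > 0))"
  have Dqn: "Dp (q, n) \<noteq> 0" unfolding Dp_def using D_ne[OF R b(1,2) q0 q1 reg] by simp
  have cD: "\<And>p. isCont Dp p" unfolding Dp_def by (rule isCont_D)
  have ev: "eventually P (nhds (q, n))"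
  proof -
    have e1: "eventually (\<lambda>z::real\<times>real. fst z > 0) (nhds (q, n))"
      by (rule ev_pos) (use q0 in \<open>auto intro: continuous_intros\<close>)
    have e2: "eventually (\<lambda>z. Dp z \<noteq> 0) (nhds (q, n))" by (rule ev_ne[OF cD Dqn])
    have e3: "eventually (\<lambda>z::real\<times>real. (1 - fst z) * (1 - q) > 0) (nhds (q, n))"
    proof (rule ev_pos)
      show "isCont (\<lambda>z::real\<times>real. (1 - fst z) * (1 - q)) (q, n)" by (intro continuous_intros)
      show "(1 - fst (q, n)) * (1 - q) > 0" using q1
        by (cases "q < 1") (auto intro: mult_neg_neg)
    qed
    have e4: "eventually (\<lambda>z. q < 1 \<longrightarrow> (1 - R) * lfun R b1 b2 b3 (fst z) - (1 - R) * snd z > 0) (nhds (q, n))"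
    proof (cases "q < 1")
      case True
      have w: "(1 - R) * q + R > 0"
      proof (cases "R < 1")
        case True then show ?thesis using R q0 by (simp add: add_nonneg_pos)
      next
        case False
        have "(R - 1) * q < (R - 1) * 1" using False R \<open>q < 1\<close> by (intro mult_strict_left_mono) auto
        then show ?thesis by (simp add: algebra_simps)
      qed
      have "eventually (\<lambda>z::real\<times>real. (1 - R) * lfun R b1 b2 b3 (fst z) - (1 - R) * snd z > 0) (nhds (q, n))"
      proof (rule ev_pos)
        show "isCont (\<lambda>z::real\<times>real. (1 - R) * lfun R b1 b2 b3 (fst z) - (1 - R) * snd z) (q, n)"
          using isCont_l[of R "(q,n)" b1 b2 b3] w b by (auto intro!: continuous_intros)
        show "(1 - R) * lfun R b1 b2 b3 (fst (q, n)) - (1 - R) * snd (q, n) > 0" using reg True by auto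
      qed
      then show ?thesis by (rule eventually_mono) simp
    qed simp
    show ?thesis unfolding P_def
      by (rule eventually_conj[OF e1 eventually_conj[OF e2 eventually_conj[OF e3 e4]]])
  qed
  then obtain U where U: "open U" "(q, n) \<in> U" "\<And>z. z \<in> U \<Longrightarrow> P z"
    unfolding eventually_nhds by blast
  have contf: "continuous_on U f"
  proof (rule continuous_at_imp_continuous_on, intro ballI)
    fix z assume "z \<in> U"
    then have "P z" by (rule U(3))
    then have "fst z \<noteq> 1" "Dp z \<noteq> 0" unfolding P_def by auto
    then show "isCont f z" unfolding f_def using R cD[of z]
      by (auto intro!: continuous_intros)
  qed
  have agree: "\<And>z. z \<in> U \<Longrightarrow> z \<in> Gset R b1 b2 b3 \<Longrightarrow> Ofun R b1 b2 b3 (fst z) (snd z) / snd z = f z"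
  proof -
    fix z :: "real \<times> real" assume "z \<in> Gset R b1 b2 b3"
    then have "snd z \<noteq> 0" unfolding Gset_def Sset_def by (cases z) auto
    then show "Ofun R b1 b2 b3 (fst z) (snd z) / snd z = f z"
      unfolding f_def Dp_def by (rule Ofun_div)
  qed
  have inG: "(u, v) \<in> Gset R b1 b2 b3" if "P (u, v)" "u \<noteq> 1" "u \<noteq> R / (R - 1)" "v > 0" for u v
  proof -
    have w: "(1 - R) * u + R \<noteq> 0"
    proof
      assume "(1 - R) * u + R = 0"
      then have "u * (R - 1) = R" by (simp add: algebra_simps)
      then have "u = R / (R - 1)" using R by (simp add: field_simps)
      then show False using that by simp
    qed
    have "u < 1 \<Longrightarrow> q < 1" using that(1) unfolding P_def
      by (auto simp: zero_less_mult_iff)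
    then show ?thesis using that w unfolding Gset_def Sset_def P_def Dp_def by auto
  qed
  have FU: "Ffun R b1 b2 b3 (fst z) (snd z) = f z" if zU: "z \<in> U" "snd z \<ge> 0" for z
  proof (rule Ffun_eqI[OF U(1) zU(1) contf agree])
    show "z islimpt Gset R b1 b2 b3"
    proof -
      obtain \<delta> where d: "\<delta> > 0" "ball z \<delta> \<subseteq> U"
        using open_contains_ball[THEN iffD1, OF U(1)] zU(1) by blast
      show ?thesis
      proof (rule limptI[OF d(1) zU(2), where c = "R / (R - 1)"])
        fix u v assume uv: "(u, v) \<in> ball z \<delta>" "u \<noteq> 1" "u \<noteq> R / (R - 1)" "0 < v"
        have "P (u, v)" by (rule U(3)[OF subsetD[OF d(2) uv(1)]])
        then show "(u, v) \<in> Gset R b1 b2 b3" by (rule inG[OF _ uv(2-4)])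
      qed
    qed
  qed
  obtain d where d: "d > 0" "ball (q, n) d \<subseteq> U"
    using open_contains_ball[THEN iffD1, OF U(1)] U(2) by blast
  define C where "C = 2 * (1 - R)^2 * q / R"
  define D' where "D' = - b1 - sgn (1 - R) * (b1 * phifun R b1 b2 b3 q n / sqrt ((phifun R b1 b2 b3 q n)^2 + Esq R b2 q))"
  have dD: "((\<lambda>x. Dfun R b1 b2 b3 q x) has_real_derivative D') (at n)"
    unfolding D'_def by (rule Dderiv[OF R b(2) q1])
  have D'le: "D' \<le> 0" unfolding D'_def by (rule Dderiv_nonpos[OF b(1) Esq_pos[OF R b(2) q1]])
  have Dn: "Dfun R b1 b2 b3 q n \<noteq> 0" using Dqn unfolding Dp_def by simp
  have dg: "((\<lambda>x. f (q, x)) has_real_derivative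
       (0 - C * (- (D' * inverse (Dfun R b1 b2 b3 q n ^ Suc (Suc 0)))))) (at n)"
    unfolding f_def Dp_def C_def fst_conv snd_conv
    by (rule DERIV_diff[OF DERIV_const DERIV_cmult[OF DERIV_inverse_fun[OF dD Dn]]])
  have Cpos: "C \<ge> 0" unfolding C_def using R q0 by simp
  have le: "0 - C * (- (D' * inverse (Dfun R b1 b2 b3 q n ^ Suc (Suc 0)))) \<le> 0"
  proof -
    have "0 - C * (- (D' * inverse (Dfun R b1 b2 b3 q n ^ Suc (Suc 0))))
       = (C * inverse (Dfun R b1 b2 b3 q n ^ Suc (Suc 0))) * D'" by (simp add: algebra_simps)
    also have "\<dots> \<le> 0" using Cpos D'le by (intro mult_nonneg_nonpos) auto
    finally show ?thesis .
  qed
  have "((\<lambda>x. Ffun R b1 b2 b3 q x) has_real_derivative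
       (0 - C * (- (D' * inverse (Dfun R b1 b2 b3 q n ^ Suc (Suc 0)))))) (at n within {0..})"
  proof (rule has_field_derivative_transform_within[OF has_field_derivative_at_within[OF dg] d(1)])
    show "n \<in> {0..}" using n0 by simp
    fix x :: real assume x: "x \<in> {0..}" "dist x n < d"
    have "(q, x) \<in> U" using d(2) x by (auto simp: dist_Pair_Pair dist_commute)
    then show "f (q, x) = Ffun R b1 b2 b3 q x" using FU[of "(q,x)"] x by simp
  qed
  then show ?thesis using le by blast
qed


lemma alg1:
  fixes R b2 e p r s E K :: real
  assumes s: "s * s = 1" and sp: "s * p < 0" and r2: "r^2 = p^2 + E" and r0: "r \<ge> 0"
    and E: "E = 4 * R^2 * (1 - R)^2 * (b2 - 1) * e^2"
    and K: "K = 4 * R^2 * (1 - R)^2 * (b2 - 1) / (r + \<bar>p\<bar>)"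
  shows "- p - s * r = - s * K * e^2"
proof -
  have ap: "\<bar>p\<bar> = - s * p"
  proof (cases "s > 0")
    case True
    then have "s = 1" using s by (metis mult_cancel_right1 mult_le_cancel_left1 nle_le not_less zero_le_mult_iff)
    then show ?thesis using sp by simp
  next
    case False
    then have "s = -1" using s by (metis mult_cancel_right1 mult_le_cancel_left1 nle_le not_less zero_le_mult_iff
          minus_mult_minus mult_minus_left add_eq_0_iff2 square_eq_1_iff)
    then show ?thesis using sp by simp
  qed
  have pp: "p = - s * \<bar>p\<bar>" using ap s by (simp add: algebra_simps)
  have pos: "r + \<bar>p\<bar> > 0" using sp ap r0 by simp
  have "(r - \<bar>p\<bar>) * (r + \<bar>p\<bar>) = E" using r2 by (simp add: algebra_simps power2_eq_square)
  hence "r - \<bar>p\<bar> = K * e^2" using pos unfolding K E by (simp add: field_simps)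
  hence "- p - s * r = - s * (r - \<bar>p\<bar>)" "r - \<bar>p\<bar> = K * e^2"
    using pp by (auto simp: algebra_simps)
  then show ?thesis by simp
qed

lemma alg2:
  fixes R u s K e w G :: real
  assumes R: "R \<noteq> 0" and e: "e \<noteq> 0" and G: "G \<noteq> 0"
    and Gd: "G = 2 * (1 - R) * w - s * K * e" and wd: "w = (1 - R) * u + R" and ed: "e = 1 - u"
  shows "(1 - R) / (R * e) - (2 * (1 - R)^2 * u / R) * inverse (e * G)
    = (1 - R) * (2 * (1 - R) * R - s * K) / (R * G)"
proof -
  have "(1 - R) / (R * e) - (2 * (1 - R)^2 * u / R) * inverse (e * G)
      = ((1 - R) * G - 2 * (1 - R)^2 * u) / (R * e * G)"
    using R e G by (simp add: field_simps power2_eq_square)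
  also have "(1 - R) * G - 2 * (1 - R)^2 * u = e * ((1 - R) * (2 * (1 - R) * R - s * K))"
    unfolding Gd wd ed by (simp add: algebra_simps power2_eq_square)
  also have "e * ((1 - R) * (2 * (1 - R) * R - s * K)) / (R * e * G)
      = (1 - R) * (2 * (1 - R) * R - s * K) / (R * G)"
    using e by simp
  finally show ?thesis .
qed

lemma alg3:
  fixes R b2 p :: real
  assumes R: "R > 0" "R \<noteq> 1" and sp: "sgn (1 - R) * p < 0"
  shows "(1 - R) * (2 * (1 - R) * R - sgn (1 - R) * (4 * R^2 * (1 - R)^2 * (b2 - 1) / (sqrt (p^2 + 0) + \<bar>p\<bar>)))
      / (R * (2 * (1 - R) * ((1 - R) * 1 + R) - sgn (1 - R) * (4 * R^2 * (1 - R)^2 * (b2 - 1) / (sqrt (p^2 + 0) + \<bar>p\<bar>)) * (1 - 1)))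
    = (1 - R) + R * (1 - R)^2 * (b2 - 1) * inverse p"
proof (cases "R < 1")
  case True
  then have p: "p < 0" using sp by simp
  then have "\<bar>p\<bar> = - p" by simp
  then show ?thesis using True p R by (simp add: field_simps power2_eq_square)
next
  case False
  then have R1: "R > 1" using R by simp
  then have p: "p > 0" using sp by simp
  then show ?thesis using R1 p R by (simp add: field_simps power2_eq_square)
qed

lemma phi1: "b1 \<noteq> 0 \<Longrightarrow> phifun R b1 b2 b3 1 n = b1 * (n - lfun R b1 b2 b3 1)"
  unfolding phifun_def lfun_def mfun_def by (simp add: field_simps)

lemma main_q1:
  fixes R b1 b2 b3 n :: real
  assumes R: "0 < R" "R \<noteq> 1" and b: "0 < b1" "1 < b2" "0 < b3"
    and n0: "0 \<le> n"
    and reg: "(1 - R) * mfun R b1 b3 1 < (1 - R) * n \<and> (1 - R) * n < (1 - R) * lfun R b1 b2 b3 1"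
  shows "\<exists>D. ((\<lambda>x. Ffun R b1 b2 b3 1 x) has_real_derivative D) (at n within {0..}) \<and> D \<le> 0"
proof -
  define s where "s = sgn (1 - R)"
  have s2: "s * s = 1" unfolding s_def using R by (auto simp: sgn_if)
  define phi where "phi = (\<lambda>z::real\<times>real. phifun R b1 b2 b3 (fst z) (snd z))"
  define rr where "rr = (\<lambda>z::real\<times>real. sqrt ((phi z)^2 + Esq R b2 (fst z)))"
  define K where "K = (\<lambda>z::real\<times>real. 4 * R^2 * (1 - R)^2 * (b2 - 1) / (rr z + \<bar>phi z\<bar>))"
  define G where "G = (\<lambda>z::real\<times>real. 2 * (1 - R) * ((1 - R) * fst z + R) - s * K z * (1 - fst z))"
  define H where "H = (\<lambda>z::real\<times>real. (1 - R) * (2 * (1 - R) * R - s * K z) / (R * G z))"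
  define P where "P = (\<lambda>z::real\<times>real. fst z > 0 \<and> - (s * phi z) > 0 \<and> G z \<noteq> 0
       \<and> (1 - R) * lfun R b1 b2 b3 (fst z) - (1 - R) * snd z > 0)"
  have cphi: "\<And>z. isCont phi z" unfolding phi_def phifun_def by (intro continuous_intros)
  have crr: "\<And>z. isCont rr z" unfolding rr_def phi_def phifun_def Esq_def by (intro continuous_intros)
  have Enn: "\<And>u. Esq R b2 u \<ge> 0" unfolding Esq_def using b by simp
  have rr0: "\<And>z. rr z \<ge> 0" unfolding rr_def using Enn by (simp add: add_nonneg_nonneg)
  have cK: "isCont K z" if "phi z \<noteq> 0" for z
  proof -
    have "rr z + \<bar>phi z\<bar> \<noteq> 0" using rr0[of z] that by simp
    then show ?thesis unfolding K_def using cphi crr by (auto intro!: continuous_intros)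
  qed
  have cG: "isCont G z" if "phi z \<noteq> 0" for z
    unfolding G_def using cK[OF that] by (auto intro!: continuous_intros)
  have phin: "phi (1, n) = b1 * (n - lfun R b1 b2 b3 1)" unfolding phi_def using phi1 b by simp
  have sphin: "- (s * phi (1, n)) > 0"
  proof (cases "R < 1")
    case True
    then have "n < lfun R b1 b2 b3 1" using reg by simp
    then show ?thesis using True b unfolding phin s_def by (simp add: mult_pos_neg)
  next
    case False
    then have "R > 1" using R by simp
    then have "n > lfun R b1 b2 b3 1" using reg by (simp add: mult_less_cancel_left_neg)
    then show ?thesis using \<open>R > 1\<close> b unfolding phin s_def by simp
  qed
  have phin0: "phi (1, n) \<noteq> 0" using sphin by auto
  have G1: "G (1, n) \<noteq> 0" unfolding G_def using R by simp
  have ev: "eventually P (nhds (1, n))"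
  proof -
    have e1: "eventually (\<lambda>z::real\<times>real. fst z > 0) (nhds (1, n))"
      by (rule ev_pos) (auto intro: continuous_intros)
    have e2: "eventually (\<lambda>z. - (s * phi z) > 0) (nhds (1, n))"
      by (rule ev_pos[where g="\<lambda>z. - (s * phi z)", OF _ sphin]) (use cphi in \<open>auto intro!: continuous_intros\<close>)
    have e3: "eventually (\<lambda>z. G z \<noteq> 0) (nhds (1, n))" by (rule ev_ne[OF cG[OF phin0] G1])
    have e4: "eventually (\<lambda>z::real\<times>real. (1 - R) * lfun R b1 b2 b3 (fst z) - (1 - R) * snd z > 0) (nhds (1, n))"
    proof (rule ev_pos)
      show "isCont (\<lambda>z::real\<times>real. (1 - R) * lfun R b1 b2 b3 (fst z) - (1 - R) * snd z) (1, n)"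
        using isCont_l[of R "(1,n)" b1 b2 b3] b by (auto intro!: continuous_intros)
      show "(1 - R) * lfun R b1 b2 b3 (fst (1::real, n)) - (1 - R) * snd (1::real, n) > 0" using reg by auto
    qed
    show ?thesis unfolding P_def
      by (rule eventually_conj[OF e1 eventually_conj[OF e2 eventually_conj[OF e3 e4]]])
  qed
  then obtain U where U: "open U" "(1, n) \<in> U" "\<And>z. z \<in> U \<Longrightarrow> P z"
    unfolding eventually_nhds by blast
  have contH: "continuous_on U H"
  proof (rule continuous_at_imp_continuous_on, intro ballI)
    fix z assume "z \<in> U"
    then have "P z" by (rule U(3))
    then have "phi z \<noteq> 0" "G z \<noteq> 0" unfolding P_def by auto
    then show "isCont H z" unfolding H_def using R cK[of z] cG[of z]
      by (auto intro!: continuous_intros)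
  qed
  have DeG: "Dfun R b1 b2 b3 (fst z) (snd z) = (1 - fst z) * G z" if "P z" for z
  proof -
    have "- phi z - s * rr z = - s * K z * (1 - fst z)^2"
    proof (rule alg1[OF s2])
      show "s * phi z < 0" using that unfolding P_def by auto
      show "(rr z)^2 = (phi z)^2 + Esq R b2 (fst z)" unfolding rr_def
        using Enn[of "fst z"] by (simp add: add_nonneg_nonneg)
      show "rr z \<ge> 0" by (rule rr0)
      show "Esq R b2 (fst z) = 4 * R^2 * (1 - R)^2 * (b2 - 1) * (1 - fst z)^2" unfolding Esq_def ..
      show "K z = 4 * R^2 * (1 - R)^2 * (b2 - 1) / (rr z + \<bar>phi z\<bar>)" unfolding K_def ..
    qed
    then show ?thesis unfolding Dfun_def G_def phi_def rr_def s_def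
      by (simp add: algebra_simps power2_eq_square)
  qed
  have agree: "Ofun R b1 b2 b3 (fst z) (snd z) / snd z = H z"
    if zU: "z \<in> U" "z \<in> Gset R b1 b2 b3" for z
  proof -
    have Pz: "P z" using U(3) zU(1) .
    have v: "snd z \<noteq> 0" and u: "fst z \<noteq> 1" using zU(2) unfolding Gset_def Sset_def by (cases z; auto)+
    have "Ofun R b1 b2 b3 (fst z) (snd z) / snd z = (1 - R) / (R * (1 - fst z))
        - (2 * (1 - R)^2 * fst z / R) * inverse ((1 - fst z) * G z)"
      using Ofun_div[OF v] DeG[OF Pz] by simp
    also have "\<dots> = H z" unfolding H_def
      by (rule alg2) (use R u Pz in \<open>auto simp: P_def G_def\<close>)
    finally show ?thesis .
  qed
  have inG: "(u, v) \<in> Gset R b1 b2 b3" if Puv: "P (u, v)" "u \<noteq> 1" "u \<noteq> R / (R - 1)" "v > 0" for u v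
  proof -
    have w: "(1 - R) * u + R \<noteq> 0"
    proof
      assume "(1 - R) * u + R = 0"
      then have "u * (R - 1) = R" by (simp add: algebra_simps)
      then have "u = R / (R - 1)" using R by (simp add: field_simps)
      then show False using Puv by simp
    qed
    have "Dfun R b1 b2 b3 u v \<noteq> 0" using DeG[OF Puv(1)] Puv(1,2) unfolding P_def by simp
    then show ?thesis using Puv w unfolding Gset_def Sset_def P_def by auto
  qed
  have FU: "Ffun R b1 b2 b3 (fst z) (snd z) = H z" if zU: "z \<in> U" "snd z \<ge> 0" for z
  proof (rule Ffun_eqI[OF U(1) zU(1) contH agree])
    show "z islimpt Gset R b1 b2 b3"
    proof -
      obtain \<delta> where d: "\<delta> > 0" "ball z \<delta> \<subseteq> U"
        using open_contains_ball[THEN iffD1, OF U(1)] zU(1) by blast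
      show ?thesis
      proof (rule limptI[OF d(1) zU(2), where c = "R / (R - 1)"])
        fix u v assume uv: "(u, v) \<in> ball z \<delta>" "u \<noteq> 1" "u \<noteq> R / (R - 1)" "0 < v"
        have "P (u, v)" by (rule U(3)[OF subsetD[OF d(2) uv(1)]])
        then show "(u, v) \<in> Gset R b1 b2 b3" by (rule inG[OF _ uv(2-4)])
      qed
    qed
  qed
  obtain d where d: "d > 0" "ball (1, n) d \<subseteq> U"
    using open_contains_ball[THEN iffD1, OF U(1)] U(2) by blast
  define A where "A = R * (1 - R)^2 * (b2 - 1)"
  define h where "h = (\<lambda>x. (1 - R) + A * inverse (phifun R b1 b2 b3 1 x))"
  have hH: "H (1, x) = h x" if "(1, x) \<in> U" for x
  proof -
    have sp: "sgn (1 - R) * phifun R b1 b2 b3 1 x < 0" using U(3)[OF that] unfolding P_def phi_def s_def by simp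
    show ?thesis unfolding H_def G_def K_def rr_def h_def A_def s_def phi_def
      using alg3[OF R sp, of b2] by (simp add: Esq_def)
  qed
  have dphi: "((\<lambda>x. phifun R b1 b2 b3 1 x) has_real_derivative b1) (at n)"
    unfolding phifun_def by (auto intro!: derivative_eq_intros)
  have pn: "phifun R b1 b2 b3 1 n \<noteq> 0" using phin0 unfolding phi_def by simp
  have dh: "(h has_real_derivative (0 + A * (- (b1 * inverse (phifun R b1 b2 b3 1 n ^ Suc (Suc 0)))))) (at n)"
    unfolding h_def by (rule DERIV_add[OF DERIV_const DERIV_cmult[OF DERIV_inverse_fun[OF dphi pn]]])
  have le: "0 + A * (- (b1 * inverse (phifun R b1 b2 b3 1 n ^ Suc (Suc 0)))) \<le> 0"
  proof -
    have "A \<ge> 0" unfolding A_def using R b by simp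
    moreover have "b1 * inverse (phifun R b1 b2 b3 1 n ^ Suc (Suc 0)) \<ge> 0" using b by simp
    ultimately show ?thesis by (simp add: mult_nonneg_nonneg)
  qed
  have "((\<lambda>x. Ffun R b1 b2 b3 1 x) has_real_derivative
       (0 + A * (- (b1 * inverse (phifun R b1 b2 b3 1 n ^ Suc (Suc 0)))))) (at n within {0..})"
  proof (rule has_field_derivative_transform_within[OF has_field_derivative_at_within[OF dh] d(1)])
    show "n \<in> {0..}" using n0 by simp
    fix x :: real assume x: "x \<in> {0..}" "dist x n < d"
    have xU: "(1, x) \<in> U" using d(2) x by (auto simp: dist_Pair_Pair dist_commute)
    then show "h x = Ffun R b1 b2 b3 1 x" using FU[of "(1,x)"] hH[OF xU] x by simp
  qed
  then show ?thesis using le by blast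
qed


theorem lemmaE3:
  fixes R b1 b2 b3 q n :: real
  assumes "0 < R" and "R \<noteq> 1" and "0 < b1" and "1 < b2" and "0 < b3"
    and "0 \<le> n"
    and "(0 < q \<and> q \<le> 1 \<and> (1 - R) * mfun R b1 b3 q < (1 - R) * n
            \<and> (1 - R) * n < (1 - R) * lfun R b1 b2 b3 q)
         \<or> (1 < q \<and> (1 - R) * mfun R b1 b3 q < (1 - R) * n)"
  shows "\<exists>D. ((\<lambda>x. Ffun R b1 b2 b3 q x) has_real_derivative D) (at n within {0..}) \<and> D \<le> 0"
proof (cases "q = 1")
  case True
  then show ?thesis using main_q1[OF assms(1-6)] assms(7) by auto
next
  case False
  then show ?thesis by (rule main_qne1[OF assms(1-6) _ assms(7)])
qed

end
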